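(* For every alphabet size $\sigma \geq 2$ and every Parikh vector $P \in \mathbb{N}^{\sigma}$, and for every vertex $w$ of the configuration graph $G(P)$, there exists a Hamiltonian path in $G(P)$ starting at $w$.
   Context: Alphabet $\Sigma = [\sigma]$. For $P \in \mathbb{N}^\sigma$, $n := \sum_a P[a]$ and $\Sigma^{*|_P}$ is the set of words of length $n$ over $\Sigma$ in which each symbol $a$ occurs exactly $P[a]$ times. For a word $w$ and $i\neq j$ with $w[i]\neq w[j]$, the 2-swap $w\circ(i,j)$ exchanges the symbols at positions $i$ and $j$. The configuration graph $G(P)$ has vertex set $\Sigma^{*|_P}$ and an edge $\{w,u\}$ whenever $u = w\circ(i,j)$ for some 2-swap. A Hamiltonian path starting at $w$ is a path beginning at $w$ that visits every vertex exactly once. *)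

theory Defs
  imports Main
begin

text \<open>Alphabet [sigma] = {0..<sigma}; a Parikh vector P is a list of length sigma,
  P ! a is the required number of occurrences of symbol a.\<close>

definition words_of :: "nat \<Rightarrow> nat list \<Rightarrow> nat list set" where
  "words_of \<sigma> P = {w. length w = sum_list P \<and> set w \<subseteq> {0..<\<sigma>} \<and>
                        (\<forall>a<\<sigma>. count_list w a = P ! a)}"

definition swap2 :: "nat list \<Rightarrow> nat \<Rightarrow> nat \<Rightarrow> nat list" where
  "swap2 w i j = w[i := w ! j, j := w ! i]"

definition is_2swap :: "nat list \<Rightarrow> nat list \<Rightarrow> bool" where
  "is_2swap w u \<longleftrightarrow> (\<exists>i j. i < length w \<and> j < length w \<and> i \<noteq> j \<and>
                          w ! i \<noteq> w ! j \<and> u = swap2 w i j)"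

definition conf_edge :: "nat \<Rightarrow> nat list \<Rightarrow> nat list \<Rightarrow> nat list \<Rightarrow> bool" where
  "conf_edge \<sigma> P w u \<longleftrightarrow> w \<in> words_of \<sigma> P \<and> u \<in> words_of \<sigma> P \<and>
                           (is_2swap w u \<or> is_2swap u w)"

definition ham_path_from :: "nat \<Rightarrow> nat list \<Rightarrow> nat list \<Rightarrow> nat list list \<Rightarrow> bool" where
  "ham_path_from \<sigma> P w ps \<longleftrightarrow> ps \<noteq> [] \<and> hd ps = w \<and> distinct ps \<and>
       set ps = words_of \<sigma> P \<and>
       (\<forall>k. Suc k < length ps \<longrightarrow> conf_edge \<sigma> P (ps ! k) (ps ! Suc k))"

end

theory Submission
  imports Defs "HOL-Library.Multiset"
begin

definition dec :: "nat list \<Rightarrow> nat \<Rightarrow> nat list" where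
  "dec P c = P[c := P ! c - 1]"

lemma words_mset:
  assumes "mset u = mset w"
  shows "u \<in> words_of \<sigma> P \<longleftrightarrow> w \<in> words_of \<sigma> P"
proof -
  have "length u = length w" using assms by (metis size_mset)
  moreover have "set u = set w" using assms by (metis set_mset_mset)
  moreover have "\<And>a. count_list u a = count_list w a" using assms by (metis count_mset)
  ultimately show ?thesis unfolding words_of_def by simp
qed

lemma swap_words:
  assumes "is_2swap w u" "w \<in> words_of \<sigma> P"
  shows "u \<in> words_of \<sigma> P"
proof -
  obtain i j where ij: "i < length w" "j < length w" "u = swap2 w i j"
    using assms(1) unfolding is_2swap_def by blast
  have "mset u = mset w" using ij mset_swap[of j w i] unfolding swap2_def by simp
  thus ?thesis using words_mset assms(2) by blast
qed

lemma words_snoc: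
  assumes "length P = \<sigma>" "c < \<sigma>" "P ! c > 0"
  shows "u @ [c] \<in> words_of \<sigma> P \<longleftrightarrow> u \<in> words_of \<sigma> (dec P c)"
proof -
  have s: "sum_list (dec P c) = sum_list P - 1"
    using assms sum_list_update[of c P "P!c - 1"] unfolding dec_def by simp
  have cnt: "(\<forall>a<\<sigma>. count_list (u@[c]) a = P ! a) \<longleftrightarrow> (\<forall>a<\<sigma>. count_list u a = dec P c ! a)"
    using assms unfolding dec_def by (auto simp: nth_list_update)
  have "P ! c \<le> sum_list P" using assms by (simp add: elem_le_sum_list)
  hence "length (u@[c]) = sum_list P \<longleftrightarrow> length u = sum_list (dec P c)"
    using s assms by auto
  thus ?thesis using cnt assms unfolding words_of_def by auto
qed

lemma swap_snoc:
  assumes "is_2swap u v"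
  shows "is_2swap (u @ [c]) (v @ [c])"
proof -
  obtain i j where ij: "i < length u" "j < length u" "i \<noteq> j" "u ! i \<noteq> u ! j" "v = swap2 u i j"
    using assms unfolding is_2swap_def by blast
  have "swap2 (u @ [c]) i j = v @ [c]"
    using ij unfolding swap2_def by (simp add: list_update_append nth_append)
  thus ?thesis using ij unfolding is_2swap_def by (rule_tac x=i in exI, rule_tac x=j in exI) (auto simp: nth_append)
qed

lemma lift_block:
  assumes "length P = \<sigma>" "c < \<sigma>" "P ! c > 0" "ham_path_from \<sigma> (dec P c) u ps"
  defines "qs \<equiv> map (\<lambda>v. v @ [c]) ps"
  shows "qs \<noteq> [] \<and> hd qs = u @ [c] \<and> distinct qs \<and>
         set qs = {v \<in> words_of \<sigma> P. v \<noteq> [] \<and> last v = c} \<and>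
         successively (conf_edge \<sigma> P) qs \<and> last qs = last ps @ [c] \<and> last ps \<in> words_of \<sigma> (dec P c)"
proof -
  have H: "ps \<noteq> []" "hd ps = u" "distinct ps" "set ps = words_of \<sigma> (dec P c)"
    "successively (conf_edge \<sigma> (dec P c)) ps"
    using assms(4) unfolding ham_path_from_def successively_conv_nth by auto
  have "inj (\<lambda>v::nat list. v @ [c])" by (simp add: inj_def)
  hence d: "distinct qs" using H(3) unfolding qs_def by (simp add: distinct_map inj_on_def)
  have st: "set qs = {v \<in> words_of \<sigma> P. v \<noteq> [] \<and> last v = c}"
  proof
    show "set qs \<subseteq> {v \<in> words_of \<sigma> P. v \<noteq> [] \<and> last v = c}"
      using H(4) words_snoc[OF assms(1-3)] unfolding qs_def by auto
  next
    show "{v \<in> words_of \<sigma> P. v \<noteq> [] \<and> last v = c} \<subseteq> set qs"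
    proof
      fix v assume "v \<in> {v \<in> words_of \<sigma> P. v \<noteq> [] \<and> last v = c}"
      hence v: "v \<in> words_of \<sigma> P" "v \<noteq> []" "last v = c" by auto
      hence e: "v = butlast v @ [c]" by (metis append_butlast_last_id)
      hence "butlast v \<in> words_of \<sigma> (dec P c)" using v(1) words_snoc[OF assms(1-3)] by metis
      thus "v \<in> set qs" using H(4) e unfolding qs_def by auto
    qed
  qed
  have "successively (conf_edge \<sigma> P) qs"
    unfolding qs_def successively_map
    using H(5)
  proof (rule successively_mono)
    fix x y assume "conf_edge \<sigma> (dec P c) x y"
    thus "conf_edge \<sigma> P (x @ [c]) (y @ [c])"
      unfolding conf_edge_def using words_snoc[OF assms(1-3)] swap_snoc by blast
  qed
  moreover have "last ps \<in> words_of \<sigma> (dec P c)" using H(1,4) by auto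
  ultimately show ?thesis using H d st unfolding qs_def by (auto simp: hd_map last_map)
qed

lemma chain:
  assumes "length P = \<sigma>" "distinct cs" "cs \<noteq> []" "\<forall>c\<in>set cs. c < \<sigma> \<and> P ! c > 0"
    and blocks: "\<And>c u. c \<in> set cs \<Longrightarrow> u \<in> words_of \<sigma> (dec P c) \<Longrightarrow> \<exists>ps. ham_path_from \<sigma> (dec P c) u ps"
    and "w \<in> words_of \<sigma> P" "w \<noteq> []" "last w = hd cs"
  shows "\<exists>ps. ps \<noteq> [] \<and> hd ps = w \<and> distinct ps \<and>
            set ps = {v \<in> words_of \<sigma> P. v \<noteq> [] \<and> last v \<in> set cs} \<and>
            successively (conf_edge \<sigma> P) ps"
  using assms(2-8)
proof (induction cs arbitrary: w)
  case Nil
  then show ?case by simp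
next
  case (Cons c rest)
  have c: "c < \<sigma>" "P ! c > 0" using Cons.prems by auto
  have we: "w = butlast w @ [c]" using Cons.prems by (metis append_butlast_last_id list.sel(1))
  hence wu: "butlast w \<in> words_of \<sigma> (dec P c)" using Cons.prems(5) words_snoc[OF assms(1) c] by metis
  obtain ps where ps: "ham_path_from \<sigma> (dec P c) (butlast w) ps" using Cons.prems(4)[of c] wu by auto
  define qs where "qs = map (\<lambda>v. v @ [c]) ps"
  have Q: "qs \<noteq> [] \<and> hd qs = butlast w @ [c] \<and> distinct qs \<and>
         set qs = {v \<in> words_of \<sigma> P. v \<noteq> [] \<and> last v = c} \<and>
         successively (conf_edge \<sigma> P) qs \<and> last qs = last ps @ [c] \<and> last ps \<in> words_of \<sigma> (dec P c)"
    using lift_block[OF assms(1) c ps] unfolding qs_def by blast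
  show ?case
  proof (cases rest)
    case Nil
    then show ?thesis using Q we by (rule_tac x=qs in exI) auto
  next
    case (Cons d rest')
    have d: "d < \<sigma>" "P ! d > 0" "d \<noteq> c" using Cons.prems \<open>rest = d # rest'\<close> by auto
    define x where "x = last ps"
    have x: "x \<in> words_of \<sigma> (dec P c)" using Q x_def by auto
    have "count_list x d = dec P c ! d" using x d unfolding words_of_def by auto
    also have "\<dots> = P ! d" using d unfolding dec_def by simp
    finally have "d \<in> set x" using d by (metis count_list_0_iff not_gr0)
    then obtain i where i: "i < length x" "x ! i = d" by (metis in_set_conv_nth)
    define w' where "w' = x[i := c] @ [d]"
    have sw: "swap2 (x @ [c]) i (length x) = w'"
      unfolding swap2_def w'_def using i by (simp add: list_update_append nth_append)
    have is2: "is_2swap (x @ [c]) w'"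
      unfolding is_2swap_def using i d sw by (rule_tac x=i in exI, rule_tac x="length x" in exI) (auto simp: nth_append)
    have xc: "x @ [c] \<in> words_of \<sigma> P" using x words_snoc[OF assms(1) c] by blast
    have w'w: "w' \<in> words_of \<sigma> P" using swap_words[OF is2 xc] .
    have edge: "conf_edge \<sigma> P (x @ [c]) w'" unfolding conf_edge_def using xc w'w is2 by blast
    obtain ps2 where ps2: "ps2 \<noteq> []" "hd ps2 = w'" "distinct ps2"
      "set ps2 = {v \<in> words_of \<sigma> P. v \<noteq> [] \<and> last v \<in> set rest}"
      "successively (conf_edge \<sigma> P) ps2"
      using Cons.IH[of w'] Cons.prems \<open>rest = d # rest'\<close> w'w unfolding w'_def by auto
    have "c \<notin> set rest" using Cons.prems by simp
    hence disj: "set qs \<inter> set ps2 = {}" using Q ps2(4) by auto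
    show ?thesis
      apply (rule exI[of _ "qs @ ps2"])
      using Q ps2 disj we edge x_def by (auto simp: successively_append_iff)
  qed
qed

lemma zero_case:
  "length P = \<sigma> \<Longrightarrow> sum_list P = 0 \<Longrightarrow> w \<in> words_of \<sigma> P \<Longrightarrow> \<exists>ps. ham_path_from \<sigma> P w ps"
proof -
    assume a: "length P = \<sigma>" "sum_list P = 0" "w \<in> words_of \<sigma> P"
    have z: "\<forall>a<\<sigma>. P ! a = 0" using a(1,2) by (metis elem_le_sum_list le_zero_eq)
    have W: "words_of \<sigma> P = {[]}"
      unfolding words_of_def a(2) using z by auto
    hence w: "w = []" using a(3) by blast
    have "ham_path_from \<sigma> P w [[]]" unfolding ham_path_from_def W w by simp
    thus "\<exists>ps. ham_path_from \<sigma> P w ps" by blast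
qed

theorem main:
  "\<forall>P w. length P = \<sigma> \<longrightarrow> sum_list P = n \<longrightarrow> w \<in> words_of \<sigma> P \<longrightarrow> (\<exists>ps. ham_path_from \<sigma> P w ps)"
proof (induction n)
  case 0
  show ?case using zero_case by blast
next
  case (Suc n)
  show ?case
  proof (intro allI impI)
    fix P w assume a: "length P = \<sigma>" "sum_list P = Suc n" "w \<in> words_of \<sigma> P"
    have "length w = Suc n" using a(2,3) unfolding words_of_def by (simp only: mem_Collect_eq)
    hence wne: "w \<noteq> []" by (metis Zero_not_Suc list.size(3))
    define c where "c = last w"
    have "c \<in> set w" using wne c_def by simp
    hence cs: "c < \<sigma>" using a(3) unfolding words_of_def by auto
    have "count_list w c > 0" using \<open>c \<in> set w\<close> by (metis count_list_0_iff not_gr0)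
    hence cp: "P ! c > 0" using a(3) cs unfolding words_of_def by auto
    define cs where "cs = c # filter (\<lambda>d. d \<noteq> c \<and> P ! d > 0) [0..<\<sigma>]"
    have blocks: "\<exists>ps. ham_path_from \<sigma> (dec P d) u ps"
      if "d \<in> set cs" "u \<in> words_of \<sigma> (dec P d)" for d u
    proof -
      have d: "d < \<sigma>" "P ! d > 0" using that cs cp unfolding cs_def by auto
      have "sum_list (dec P d) = n"
        using a d sum_list_update[of d P "P!d - 1"] unfolding dec_def by simp
      moreover have "length (dec P d) = \<sigma>" using a unfolding dec_def by simp
      ultimately show ?thesis using Suc.IH that(2) by blast
    qed
    have c1: "distinct cs" unfolding cs_def by simp
    have c2: "cs \<noteq> []" unfolding cs_def by simp
    have c3: "\<forall>d\<in>set cs. d < \<sigma> \<and> P ! d > 0" unfolding cs_def using cs cp by auto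
    have c4: "last w = hd cs" unfolding cs_def c_def by simp
    obtain ps where ps: "ps \<noteq> []" "hd ps = w" "distinct ps"
      "set ps = {v \<in> words_of \<sigma> P. v \<noteq> [] \<and> last v \<in> set cs}"
      "successively (conf_edge \<sigma> P) ps"
      using chain[OF a(1) c1 c2 c3 blocks a(3) wne c4] by blast
    have "set ps = words_of \<sigma> P"
    proof -
      have "v \<noteq> [] \<and> last v \<in> set cs" if "v \<in> words_of \<sigma> P" for v
      proof -
        have vne: "v \<noteq> []" using that a unfolding words_of_def by auto
        hence lv: "last v \<in> set v" by simp
        hence "last v < \<sigma>" using that unfolding words_of_def by auto
        moreover have "count_list v (last v) > 0" using lv by (metis count_list_0_iff not_gr0)
        ultimately have "P ! last v > 0" using that unfolding words_of_def by auto
        thus ?thesis using vne \<open>last v < \<sigma>\<close> unfolding cs_def by auto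
      qed
      thus ?thesis using ps(4) by auto
    qed
    thus "\<exists>ps. ham_path_from \<sigma> P w ps" using ps unfolding ham_path_from_def successively_conv_nth
      by blast
  qed
qed

theorem theorem4:
  fixes \<sigma> :: nat and P :: "nat list" and w :: "nat list"
  assumes "\<sigma> \<ge> 2" and "length P = \<sigma>" and "w \<in> words_of \<sigma> P"
  shows "\<exists>ps. ham_path_from \<sigma> P w ps"
  using main assms by blast

end
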